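(* Let $t$ be a positive integer, $r$ a positive integer and $g\in\{0,1\}$. Let $$A_{r,g}(z)=\sum_{m=0}^{r}\binom{r-g+\frac14}{m}\binom{2r-g-m}{r-g}(-z)^m,\qquad B_{r,g}(z)=\sum_{m=0}^{r-g}\binom{r-\frac14}{m}\binom{2r-g-m}{r}(-z)^m,$$ and define the binary forms $A^*_{r,g}(X,Y)=X^{r}A_{r,g}(Y/X)$ and $B^*_{r,g}(X,Y)=X^{r-g}B_{r,g}(Y/X)$. For integers $x,y$ put $\Xi(x,y)=4(1+\sqrt{-t})(x-\sqrt{-t}\,y)^4$ and $H(x,y)=4(\sqrt{-t}-1)(x+\sqrt{-t}\,y)^4$. Then for every pair of integers $(x,y)$, both $A^*_{r,g}\big(\Xi(x,y),\,\Xi(x,y)-H(x,y)\big)$ and $B^*_{r,g}\big(\Xi(x,y),\,\Xi(x,y)-H(x,y)\big)$ are algebraic integers in $\mathbb{Q}(\sqrt{-t})$.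
   Context: For real $a$ and a nonnegative integer $m$, $\binom{a}{m}=a(a-1)\cdots(a-m+1)/m!$. The degrees of $A_{r,g}$ and $B_{r,g}$ are $r$ and $r-g$ respectively. $\Xi$ and $H$ are the fourth powers $\xi^4,\eta^4$ of the resolvent forms; one has $\Xi-H=8P(x,y)$ with $P(x,y)=x^{4}+4tx^{3}y-6tx^{2}y^{2}-4t^{2}xy^{3}+t^{2}y^{4}$. *)

theory Defs
  imports Complex_Main "HOL-Computational_Algebra.Polynomial"
begin

definition sqrtm :: "nat \<Rightarrow> complex" where
  "sqrtm t = \<i> * complex_of_real (sqrt (real t))"

definition in_Qsqrtm :: "nat \<Rightarrow> complex \<Rightarrow> bool" where
  "in_Qsqrtm t z \<longleftrightarrow> (\<exists>a b. a \<in> \<rat> \<and> b \<in> \<rat> \<and>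
      z = complex_of_real a + complex_of_real b * sqrtm t)"

text \<open>Homogenised forms A*_{r,g}(X,Y) = X^r A_{r,g}(Y/X) and B*_{r,g}(X,Y) = X^(r-g) B_{r,g}(Y/X),
  written out as polynomials in X, Y.\<close>
definition Astar :: "nat \<Rightarrow> nat \<Rightarrow> complex \<Rightarrow> complex \<Rightarrow> complex" where
  "Astar r g X Y = (\<Sum>m=0..r.
     complex_of_real ((real r - real g + 1/4) gchoose m) *
     of_nat ((2*r - g - m) choose (r - g)) * (- Y) ^ m * X ^ (r - m))"

definition Bstar :: "nat \<Rightarrow> nat \<Rightarrow> complex \<Rightarrow> complex \<Rightarrow> complex" where
  "Bstar r g X Y = (\<Sum>m=0..r-g.
     complex_of_real ((real r - 1/4) gchoose m) *
     of_nat ((2*r - g - m) choose r) * (- Y) ^ m * X ^ (r - g - m))"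

definition Xi :: "nat \<Rightarrow> int \<Rightarrow> int \<Rightarrow> complex" where
  "Xi t x y = 4 * (1 + sqrtm t) * (of_int x - sqrtm t * of_int y) ^ 4"

definition Eta :: "nat \<Rightarrow> int \<Rightarrow> int \<Rightarrow> complex" where
  "Eta t x y = 4 * (sqrtm t - 1) * (of_int x + sqrtm t * of_int y) ^ 4"

end

theory Submission imports Defs "HOL-Computational_Algebra.Formal_Power_Series" begin

unbundle fps_syntax

definition cc :: "real \<Rightarrow> nat \<Rightarrow> real" where "cc a m = (a gchoose m) * 8^m"

lemma cc_add: "cc (a+b) n = (\<Sum>k=0..n. cc a k * cc b (n-k))"
proof -
  have "cc (a+b) n = (\<Sum>k=0..n. (a gchoose k) * (b gchoose (n - k))) * 8^n"
    unfolding cc_def gbinomial_Vandermonde ..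
  also have "\<dots> = (\<Sum>k=0..n. cc a k * cc b (n-k))"
    unfolding sum_distrib_right
  proof (rule sum.cong)
    fix k assume "k \<in> {0..n}"
    then have "(8::real)^n = 8^k * 8^(n-k)" by (simp add: power_add[symmetric])
    then show "(a gchoose k) * (b gchoose (n - k)) * 8 ^ n = cc a k * cc b (n - k)"
      by (simp add: cc_def)
  qed simp
  finally show ?thesis .
qed

lemma cc_Ints_add: "(\<And>k. cc a k \<in> \<int>) \<Longrightarrow> (\<And>k. cc b k \<in> \<int>) \<Longrightarrow> cc (a+b) n \<in> \<int>"
  unfolding cc_add by (intro Ints_sum Ints_mult) auto

lemma cc_nat: "cc (real k) n \<in> \<int>"
  unfolding cc_def binomial_gbinomial[symmetric] by simp

lemma cc_fps_mult: "Abs_fps (cc a) * Abs_fps (cc b) = Abs_fps (cc (a+b))"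
  by (rule fps_ext) (simp add: fps_mult_nth cc_add)

lemma cc_one: "Abs_fps (cc 1) = 1 + 8 * fps_X"
proof (rule fps_ext)
  fix n
  have "cc 1 n = of_nat (1 choose n) * 8^n"
    unfolding cc_def using binomial_gbinomial[of 1 n, where 'a=real] by simp
  then show "Abs_fps (cc 1) $ n = (1 + 8 * fps_X) $ n"
    by (cases n) (auto simp: binomial_eq_0 fps_X_nth numeral_fps_const)
qed

lemma quart_eq:
  fixes w x :: "real fps"
  assumes "(1 + 2*w)^4 = 1 + 8*x"
  shows "w = x - 3*w^2 - 4*w^3 - 2*w^4"
proof -
  have "8 * (w - (x - 3*w^2 - 4*w^3 - 2*w^4)) = (1 + 2*w)^4 - (1 + 8*x)"
    by (simp add: algebra_simps power2_eq_square power3_eq_cube power4_eq_xxxx)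
  also have "\<dots> = 0" using assms by simp
  finally have "8 * (w - (x - 3*w^2 - 4*w^3 - 2*w^4)) = 0" .
  then have "w - (x - 3*w^2 - 4*w^3 - 2*w^4) = 0"
    by (subst (asm) mult_eq_0_iff) (simp add: numeral_fps_const)
  then show ?thesis by (simp only: right_minus_eq)
qed

lemma pow_coef:
  fixes W :: "real fps"
  assumes W0: "W $ 0 = 0" and Wi: "\<forall>i<m. W $ i \<in> \<int>"
  shows "\<forall>n<m. (W^k) $ n \<in> \<int>"
proof (induction k)
  case 0 then show ?case by (auto simp: fps_one_nth)
next
  case (Suc k)
  show ?case
  proof (intro allI impI)
    fix n assume "n < m"
    then show "(W^Suc k) $ n \<in> \<int>"
      using Suc Wi by (auto simp: fps_mult_nth intro!: Ints_sum Ints_mult)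
  qed
qed

lemma pow_coef2:
  fixes W :: "real fps"
  assumes W0: "W $ 0 = 0" and Wi: "\<forall>i<m. W $ i \<in> \<int>" and k: "k \<ge> 2"
  shows "(W^k) $ m \<in> \<int>"
proof -
  obtain j where j: "k = Suc j" "j \<ge> 1" using k by (cases k) auto
  have P: "\<forall>n<m. (W^j) $ n \<in> \<int>" using pow_coef[OF W0 Wi] .
  have "(W^k) $ m = (\<Sum>i=0..m. W $ i * (W^j) $ (m-i))" by (simp add: j fps_mult_nth)
  also have "\<dots> \<in> \<int>"
  proof (intro Ints_sum)
    fix i assume i: "i \<in> {0..m}"
    show "W $ i * (W^j) $ (m-i) \<in> \<int>"
    proof (cases "i = 0")
      case True then show ?thesis using W0 by simp
    next
      case False
      show ?thesis
      proof (cases "i = m")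
        case True
        have z: "(W^j) $ (m-i) = 0" using W0 j(2) True by (simp add: fps_nth_power_0)
        show ?thesis by (simp only: z mult_zero_right) simp
      next
        case False2: False
        then show ?thesis using False i Wi P by (intro Ints_mult) auto
      qed
    qed
  qed
  finally show ?thesis .
qed

lemma cc_quarter: "cc (1/4) n \<in> \<int>"
proof -
  define C :: "real fps" where "C = Abs_fps (cc (1/4))"
  define W :: "real fps" where "W = Abs_fps (\<lambda>m. if m = 0 then 0 else cc (1/4) m / 2)"
  have C4: "C^4 = 1 + 8 * fps_X"
  proof -
    have "C^4 = (C*C)*(C*C)" by (simp add: power4_eq_xxxx mult.assoc)
    also have "\<dots> = Abs_fps (cc 1)" unfolding C_def cc_fps_mult by simp
    finally show ?thesis using cc_one by simp
  qed
  have CW: "C = 1 + 2*W"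
    by (rule fps_ext) (auto simp: C_def W_def cc_def numeral_fps_const)
  have eq: "W = fps_X - 3*W^2 - 4*W^3 - 2*W^4"
    using quart_eq[of W fps_X] C4 CW by simp
  have W0: "W $ 0 = 0" by (simp add: W_def)
  have Wint: "W $ m \<in> \<int>" for m
  proof (induction m rule: less_induct)
    case (less m)
    then have Wi: "\<forall>i<m. W $ i \<in> \<int>" by auto
    have "W $ m = fps_X $ m - 3*(W^2) $ m - 4*(W^3) $ m - 2*(W^4) $ m"
      by (subst eq) (simp add: numeral_fps_const)
    also have "\<dots> \<in> \<int>"
      using pow_coef2[OF W0 Wi, of 2] pow_coef2[OF W0 Wi, of 3] pow_coef2[OF W0 Wi, of 4]
      by (intro Ints_diff Ints_mult) (auto simp: fps_X_nth)
    finally show ?case .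
  qed
  show ?thesis
  proof (cases "n = 0")
    case True then show ?thesis by (simp add: cc_def)
  next
    case False
    then have "cc (1/4) n = 2 * W $ n" by (simp add: W_def)
    then show ?thesis using Wint by simp
  qed
qed

lemma cc_k_quarter: "cc (real k + 1/4) n \<in> \<int>"
  by (rule cc_Ints_add[OF cc_nat cc_quarter])

lemma cc_k_3quarter: "cc (real k + 3/4) n \<in> \<int>"
proof -
  have h: "cc (1/4 + 1/4) n \<in> \<int>" for n by (rule cc_Ints_add[OF cc_quarter cc_quarter])
  have h2: "cc (1/4 + 1/4 + 1/4) n \<in> \<int>" for n by (rule cc_Ints_add[OF h cc_quarter])
  have "cc (real k + (1/4+1/4+1/4)) n \<in> \<int>" by (rule cc_Ints_add[OF cc_nat h2])
  then show ?thesis by simp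
qed

definition ZS :: "nat \<Rightarrow> complex set" where
  "ZS t = {z. \<exists>a b::int. z = of_int a + of_int b * sqrtm t}"

lemma s2: "sqrtm t * sqrtm t = - of_nat t"
proof -
  have "complex_of_real (sqrt (real t)) * complex_of_real (sqrt (real t)) = of_real (real t)"
    by (simp flip: of_real_mult)
  then show ?thesis by (simp add: sqrtm_def algebra_simps)
qed

lemma ZS_of_int [intro]: "of_int k \<in> ZS t"
  unfolding ZS_def by (rule CollectI, rule exI[of _ k], rule exI[of _ 0]) simp

lemma ZS_sqrtm [intro]: "sqrtm t \<in> ZS t"
  unfolding ZS_def by (rule CollectI, rule exI[of _ 0], rule exI[of _ 1]) simp

lemma ZS_add [intro]: "z \<in> ZS t \<Longrightarrow> w \<in> ZS t \<Longrightarrow> z + w \<in> ZS t"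
  unfolding ZS_def
proof (clarify)
  fix a b c d :: int
  show "\<exists>a' b'. of_int a + of_int b * sqrtm t + (of_int c + of_int d * sqrtm t) = of_int a' + of_int b' * sqrtm t"
    by (rule exI[of _ "a+c"], rule exI[of _ "b+d"]) (simp add: algebra_simps)
qed

lemma ZS_uminus [intro]: "z \<in> ZS t \<Longrightarrow> - z \<in> ZS t"
  unfolding ZS_def
proof (clarify)
  fix a b :: int
  show "\<exists>a' b'. - (of_int a + of_int b * sqrtm t) = of_int a' + of_int b' * sqrtm t"
    by (rule exI[of _ "-a"], rule exI[of _ "-b"]) (simp add: algebra_simps)
qed

lemma ZS_diff [intro]: "z \<in> ZS t \<Longrightarrow> w \<in> ZS t \<Longrightarrow> z - w \<in> ZS t"
  using ZS_add[of z t "-w"] ZS_uminus[of w t] by simp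

lemma ZS_mult [intro]: "z \<in> ZS t \<Longrightarrow> w \<in> ZS t \<Longrightarrow> z * w \<in> ZS t"
  unfolding ZS_def
proof (clarify)
  fix a b c d :: int
  let ?s = "sqrtm t"
  have "(of_int a + of_int b * ?s) * (of_int c + of_int d * ?s)
      = of_int a * of_int c + (of_int a * of_int d + of_int b * of_int c) * ?s + of_int b * of_int d * (?s * ?s)"
    by (simp add: algebra_simps)
  also have "\<dots> = of_int (a*c - b*d*int t) + of_int (a*d + b*c) * ?s"
    by (simp add: s2 algebra_simps)
  finally show "\<exists>a' b'. (of_int a + of_int b * ?s) * (of_int c + of_int d * ?s) = of_int a' + of_int b' * ?s"
    by blast
qed

lemma ZS_one [intro]: "1 \<in> ZS t"
  using ZS_of_int[of 1 t] by simp

lemma ZS_power [intro]: "z \<in> ZS t \<Longrightarrow> z ^ n \<in> ZS t"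
  by (induction n) auto

lemma ZS_sum [intro]: "(\<And>m. m \<in> A \<Longrightarrow> f m \<in> ZS t) \<Longrightarrow> sum f A \<in> ZS t"
proof (induction A rule: infinite_finite_induct)
  case (infinite A) then show ?case using ZS_of_int[of 0 t] by simp
next
  case empty then show ?case using ZS_of_int[of 0 t] by simp
next
  case (insert x F) then show ?case by auto
qed

lemma ZS_algebraic_int: "z \<in> ZS t \<Longrightarrow> algebraic_int z"
proof -
  assume "z \<in> ZS t"
  then obtain a b :: int where z: "z = of_int a + of_int b * sqrtm t" by (auto simp: ZS_def)
  define p :: "complex poly" where "p = [:of_int (a^2 + b^2 * int t), of_int (-2*a), 1:]"
  show ?thesis
  proof (rule algebraic_int.intros[of p])
    show "lead_coeff p = 1" by (simp add: p_def)
    show "\<forall>i. coeff p i \<in> \<int>"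
    proof
      fix i show "coeff p i \<in> \<int>"
        by (cases i; cases "i - 1"; cases "i - 2") (auto simp: p_def coeff_pCons split: nat.splits)
    qed
    have "poly p z = (z - of_int a)^2 + of_int b ^2 * of_int (int t)"
      by (simp add: p_def algebra_simps power2_eq_square)
    also have "\<dots> = of_int b ^ 2 * (sqrtm t * sqrtm t + of_nat t)"
      by (simp add: z algebra_simps power2_eq_square)
    also have "\<dots> = 0" by (simp add: s2)
    finally show "poly p z = 0" .
  qed
qed

lemma ZS_Q: "z \<in> ZS t \<Longrightarrow> in_Qsqrtm t z"
proof -
  assume "z \<in> ZS t"
  then obtain a b :: int where z: "z = of_int a + of_int b * sqrtm t" by (auto simp: ZS_def)
  show ?thesis unfolding in_Qsqrtm_def
    by (rule exI[of _ "of_int a"], rule exI[of _ "of_int b"]) (simp add: z)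
qed

definition WW :: "nat \<Rightarrow> int \<Rightarrow> int \<Rightarrow> complex" where
  "WW t x y = (let s = sqrtm t; u = of_int x - s * of_int y; v = of_int x + s * of_int y in
     u^4 + (1 - s) * s * of_int y * (u + v) * (u^2 + v^2))"

lemma Xi_Eta: "Xi t x y - Eta t x y = 8 * WW t x y"
  unfolding Xi_def Eta_def WW_def Let_def by algebra

lemma Xi_ZS: "Xi t x y \<in> ZS t"
  unfolding Xi_def by (intro ZS_mult ZS_power ZS_add ZS_diff ZS_of_int ZS_sqrtm
   ZS_of_int[of 4, simplified] ZS_of_int[of 1, simplified])

lemma WW_ZS: "WW t x y \<in> ZS t"
  unfolding WW_def Let_def by (intro ZS_mult ZS_power ZS_add ZS_diff ZS_of_int ZS_sqrtm
   ZS_of_int[of 1, simplified])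

lemma gen_sum_ZS:
  assumes cc: "\<And>m. cc a m \<in> \<int>" and X: "X \<in> ZS t" and W: "W \<in> ZS t"
  shows "(\<Sum>m=0..n. complex_of_real (a gchoose m) * of_nat (f m) * (- (8*W))^m * X^(e m)) \<in> ZS t"
proof (rule ZS_sum)
  fix m
  obtain k where k: "cc a m = of_int k" using cc[of m] by (auto elim: Ints_cases)
  have "complex_of_real (a gchoose m) * of_nat (f m) * (- (8*W))^m * X^(e m)
      = complex_of_real (cc a m) * of_nat (f m) * (- W)^m * X^(e m)"
  proof -
    have "(- (8*W))^m = (-W)^m * 8^m" by (simp add: mult.commute flip: power_mult_distrib)
    then show ?thesis by (simp add: cc_def)
  qed
  also have "\<dots> = of_int k * of_int (int (f m)) * (- W)^m * X^(e m)" by (simp add: k)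
  also have "\<dots> \<in> ZS t" using X W by (intro ZS_mult ZS_power ZS_uminus ZS_of_int)
  finally show "complex_of_real (a gchoose m) * of_nat (f m) * (- (8*W))^m * X^(e m) \<in> ZS t" .
qed

theorem lemma5p1:
  fixes t r g :: nat and x y :: int
  assumes "t > 0" and "r > 0" and "g \<in> {0, 1}"
  shows "algebraic_int (Astar r g (Xi t x y) (Xi t x y - Eta t x y)) \<and>
         in_Qsqrtm t (Astar r g (Xi t x y) (Xi t x y - Eta t x y)) \<and>
         algebraic_int (Bstar r g (Xi t x y) (Xi t x y - Eta t x y)) \<and>
         in_Qsqrtm t (Bstar r g (Xi t x y) (Xi t x y - Eta t x y))"
proof -
  have a1: "real r - real g + 1/4 = real (r - g) + 1/4" using assms by auto
  have a2: "real r - 1/4 = real (r - 1) + 3/4" using assms by auto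
  have A: "Astar r g (Xi t x y) (Xi t x y - Eta t x y) \<in> ZS t"
    unfolding Xi_Eta Astar_def a1
    by (rule gen_sum_ZS[OF cc_k_quarter Xi_ZS WW_ZS])
  have B: "Bstar r g (Xi t x y) (Xi t x y - Eta t x y) \<in> ZS t"
    unfolding Xi_Eta Bstar_def a2
    by (rule gen_sum_ZS[OF cc_k_3quarter Xi_ZS WW_ZS])
  show ?thesis using A B ZS_algebraic_int ZS_Q by blast
qed

end
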